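(* Let $d\ge1$, $\lambda>0$, $\delta>0$, and let $f:\mathbb{R}^d\to\mathbb{R}$ satisfy: (A1) $f$ is continuous and has at least one minimizer; (A2) $\int_{\mathbb{R}^d}\exp(-f(y)/\delta)\,dy<+\infty$. Let $(x^k)_{k\in\mathbb{N}}$ be generated by ZOPPA. Then (i) $f^{\lambda,\delta}(x^k)\le f^{\lambda,\delta}(x^{k-1})-\frac{1}{2\lambda}\|x^k-x^{k-1}\|^2$ for all $k\ge1$, and (ii) $\|\nabla f^{\lambda,\delta}(x^k)\|=\frac{\|x^{k+1}-x^k\|}{\lambda}\to0$ as $k\to\infty$.
   Context: The zeroth-order proximal operator is $\operatorname{zprox}^\delta_{\lambda,f}(x)=\dfrac{\mathbb{E}_{y\sim\mathcal N(x,\lambda\delta I)}[y\exp(-f(y)/\delta)]}{\mathbb{E}_{y\sim\mathcal N(x,\lambda\delta I)}[\exp(-f(y)/\delta)]}$; the soft Moreau envelope is $f^{\lambda,\delta}(x)=-\delta\log\mathbb{E}_{y\sim\mathcal N(x,\lambda\delta I)}[\exp(-f(y)/\delta)]$. ZOPPA: given $x^0\in\mathbb{R}^d$, iterate $x^{k+1}=\operatorname{zprox}^\delta_{\lambda,f}(x^k)$. *)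

theory Defs
  imports "HOL-Analysis.Analysis"
begin

definition gauss_density :: "real \<Rightarrow> 'a::euclidean_space \<Rightarrow> 'a \<Rightarrow> real" where
  "gauss_density s x y = (2 * pi * s) powr (- real DIM('a) / 2) * exp (- (norm (y - x))\<^sup>2 / (2 * s))"

definition gauss_expect :: "real \<Rightarrow> 'a::euclidean_space \<Rightarrow> ('a \<Rightarrow> 'b::{banach,second_countable_topology}) \<Rightarrow> 'b" where
  "gauss_expect s x g = (\<integral>y. gauss_density s x y *\<^sub>R g y \<partial>lborel)"

definition zprox :: "real \<Rightarrow> real \<Rightarrow> ('a::euclidean_space \<Rightarrow> real) \<Rightarrow> 'a \<Rightarrow> 'a" where
  "zprox lam del f x =
     (1 / gauss_expect (lam * del) x (\<lambda>y. exp (- f y / del))) *\<^sub>R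
       gauss_expect (lam * del) x (\<lambda>y. exp (- f y / del) *\<^sub>R y)"

definition soft_moreau :: "real \<Rightarrow> real \<Rightarrow> ('a::euclidean_space \<Rightarrow> real) \<Rightarrow> 'a \<Rightarrow> real" where
  "soft_moreau lam del f x = - del * ln (gauss_expect (lam * del) x (\<lambda>y. exp (- f y / del)))"

end

theory Submission
  imports Defs
begin


lemma gd_pos: "s > 0 \<Longrightarrow> gauss_density s x y > 0"
  by (simp add: gauss_density_def)

lemma gd_le: fixes x y :: "'a::euclidean_space" shows "s > 0 \<Longrightarrow> gauss_density s x y \<le> (2 * pi * s) powr (- real DIM('a) / 2)"
  unfolding gauss_density_def by (simp add: mult_left_le)

lemma gd_shift: "gauss_density s x' y = gauss_density s x y * exp ((norm (y-x)^2 - norm (y-x')^2)/(2* s))"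
  unfolding gauss_density_def by (simp add: mult.assoc exp_add[symmetric] diff_divide_distrib)

lemma norm_sq_id: fixes x y x' :: "'a::real_inner"
  shows "norm (y-x)^2 - norm (y-x')^2 = 2 * inner (y-x) (x'-x) - norm (x'-x)^2"
  by (simp add: power2_norm_eq_inner inner_diff_left inner_diff_right inner_commute algebra_simps)

lemma exp_tbound: fixes s t :: real assumes "s > 0" shows "exp (- (t^2)/(2 * s)) * t \<le> 1 + 2 * s"
proof -
  define a where "a = t^2/(2 * s)"
  have a0: "a \<ge> 0" using assms by (simp add: a_def)
  have t2: "t^2 = 2 * s * a" using assms by (simp add: a_def)
  have E: "exp (- (t^2)/(2 * s)) = exp (- a)" by (simp add: a_def)
  have "t \<le> 1 + t^2"
  proof -
    have "0 \<le> (t - 1)^2" by simp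
    also have "(t - 1)^2 = t*t - 2*t + 1" by (simp add: power2_eq_square algebra_simps)
    finally have h1: "0 \<le> t*t - 2*t + 1" .
    have h2: "0 \<le> t*t" by simp
    from h1 h2 have "t \<le> 1 + t*t" by linarith
    thus ?thesis by (simp add: power2_eq_square)
  qed
  hence "exp (- (t^2)/(2 * s)) * t \<le> exp (- a) * (1 + t^2)" unfolding E by (intro mult_left_mono) auto
  also have "\<dots> = exp (- a) + 2 * s * (a * exp (- a))" by (simp add: t2 algebra_simps)
  also have "\<dots> \<le> 1 + 2 * s * 1"
  proof -
    have "exp (- a) \<le> 1" using a0 by simp
    moreover have "a * exp (- a) \<le> 1"
    proof -
      have "a * exp (- a) = a / exp a" by (simp add: exp_minus divide_inverse)
      also have "\<dots> \<le> 1" using exp_ge_add_one_self[of a] by (simp add: divide_le_eq del: exp_ge_add_one_self)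
      finally show ?thesis .
    qed
    moreover have "2 * s * (a * exp (- a)) \<le> 2 * s * 1" using assms \<open>a * exp (- a) \<le> 1\<close> by (intro mult_left_mono) auto
    ultimately show ?thesis by linarith
  qed
  finally show ?thesis by simp
qed

lemma gd_norm_bound: fixes x y :: "'a::euclidean_space" assumes s: "s > 0"
  shows "gauss_density s x y * norm y \<le> (2 * pi * s) powr (- real DIM('a) / 2) * (1 + 2* s + norm x)"
proof -
  define c0 where "c0 = (2 * pi * s) powr (- real DIM('a) / 2)"
  define E where "E = exp (- (norm (y-x))\<^sup>2/(2 * s))"
  have c0: "c0 > 0" using s by (simp add: c0_def)
  have gd: "gauss_density s x y = c0 * E" by (simp add: gauss_density_def c0_def E_def)
  have E1: "E \<le> 1" "E \<ge> 0" using s by (auto simp: E_def)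
  have "norm y \<le> norm (y - x) + norm x" by (metis norm_triangle_sub add.commute)
  hence "E * norm y \<le> E * norm (y-x) + E * norm x" using E1 by (metis distrib_left mult_left_mono)
  also have "\<dots> \<le> (1 + 2* s) + norm x" using exp_tbound[OF s, of "norm (y-x)"] E1
    by (smt (verit, best) E_def mult_left_le_one_le norm_ge_zero)
  finally have "E * norm y \<le> 1 + 2* s + norm x" .
  then have "c0 * (E * norm y) \<le> c0 * (1 + 2 * s + norm x)" using c0 by (intro mult_left_mono) auto
  moreover have "gauss_density s x y * norm y = c0 * (E * norm y)" by (simp add: gd)
  ultimately show ?thesis unfolding c0_def by linarith
qed

lemma gd_meas[measurable]: "(\<lambda>y. gauss_density s x y) \<in> borel_measurable lborel"
  unfolding gauss_density_def by measurable

lemma gd_cont: "s > 0 \<Longrightarrow> isCont (\<lambda>x. gauss_density s x y) x0"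
  unfolding gauss_density_def by (intro continuous_intros) auto



locale zs =
  fixes s :: real and g :: "'a::euclidean_space \<Rightarrow> real"
  assumes s_pos: "s > 0" and g_meas[measurable]: "g \<in> borel_measurable lborel"
    and g_int: "integrable lborel g" and g_pos: "\<And>y. g y > 0"
begin

definition "c0 = (2 * pi * s) powr (- real DIM('a) / 2)"
definition "U x = (\<integral>y. gauss_density s x y * g y \<partial>lborel)"
definition "M x = (\<integral>y. gauss_density s x y *\<^sub>R (g y *\<^sub>R y) \<partial>lborel)"
definition "Z x = (1 / U x) *\<^sub>R M x"

lemma c0_pos: "c0 > 0" using s_pos by (simp add: c0_def)
lemma gd_le': fixes x y :: 'a shows "gauss_density s x y \<le> c0" using gd_le[OF s_pos, of x y] by (simp add: c0_def)
lemma gd_nb: fixes x y :: 'a shows "gauss_density s x y * norm y \<le> c0 * (1 + 2 * s + norm x)"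
  using gd_norm_bound[OF s_pos, of x y] by (simp add: c0_def)
lemma gdp: fixes x y :: 'a shows "gauss_density s x y > 0" using gd_pos[OF s_pos] .

lemma intU: "integrable lborel (\<lambda>y. gauss_density s x y * g y)"
proof (rule Bochner_Integration.integrable_bound[where f="\<lambda>y. c0 * g y"])
  show "integrable lborel (\<lambda>y. c0 * g y)" using g_int by simp
  show "(\<lambda>y. gauss_density s x y * g y) \<in> borel_measurable lborel" by measurable
  show "AE y in lborel. norm (gauss_density s x y * g y) \<le> norm (c0 * g y)"
  proof (rule AE_I2)
    fix y
    have "gauss_density s x y * g y \<le> c0 * g y"
      using gd_le' g_pos[of y] by (intro mult_right_mono) auto
    then show "norm (gauss_density s x y * g y) \<le> norm (c0 * g y)"
      using gdp[of x y] g_pos[of y] c0_pos by (simp add: abs_of_pos)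
  qed
qed

lemma intM: "integrable lborel (\<lambda>y. gauss_density s x y *\<^sub>R (g y *\<^sub>R y))"
proof (rule Bochner_Integration.integrable_bound[where f="\<lambda>y. c0 * (1 + 2 * s + norm x) * g y"])
  show "integrable lborel (\<lambda>y. c0 * (1 + 2 * s + norm x) * g y)" using g_int by simp
  show "(\<lambda>y. gauss_density s x y *\<^sub>R (g y *\<^sub>R y)) \<in> borel_measurable lborel" by measurable
  show "AE y in lborel. norm (gauss_density s x y *\<^sub>R (g y *\<^sub>R y)) \<le> norm (c0 * (1 + 2 * s + norm x) * g y)"
  proof (rule AE_I2)
    fix y
    have "gauss_density s x y * norm y * g y \<le> c0 * (1 + 2 * s + norm x) * g y"
      using gd_nb g_pos[of y] by (intro mult_right_mono) auto
    moreover have "0 \<le> c0 * (1 + 2 * s + norm x) * g y" using c0_pos s_pos g_pos[of y] by simp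
    ultimately show "norm (gauss_density s x y *\<^sub>R (g y *\<^sub>R y)) \<le> norm (c0 * (1 + 2 * s + norm x) * g y)"
      using gdp[of x y] g_pos[of y] by (simp add: abs_of_pos mult_ac)
  qed
qed

lemma Upos: "U x > 0"
proof -
  have nn: "AE y in lborel. 0 \<le> gauss_density s x y * g y"
    using gdp g_pos by (auto intro!: AE_I2 less_imp_le mult_pos_pos)
  have ge: "U x \<ge> 0" unfolding U_def by (rule integral_nonneg_AE[OF nn])
  have "U x \<noteq> 0"
  proof
    assume "U x = 0"
    then have "AE y in lborel. gauss_density s x y * g y = 0"
      using integral_nonneg_eq_0_iff_AE[OF intU nn] by (simp add: U_def)
    moreover have "AE y in lborel. gauss_density s x y * g y > 0"
      using gdp g_pos by (auto intro!: mult_pos_pos)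
    ultimately have "AE y in lborel. gauss_density s x y * g y = 0 \<and> gauss_density s x y * g y > 0"
      by (rule AE_conjI)
    then have "eventually (\<lambda>y::'a. False) (ae_filter lborel)" by (rule eventually_mono) linarith
    then have "ae_filter (lborel :: 'a measure) = bot" by (simp add: trivial_limit_def)
    then show False by (simp add: ae_filter_eq_bot_iff)
  qed
  with ge show ?thesis by simp
qed

lemma Ubnd: "U x \<le> c0 * integral\<^sup>L lborel g"
proof -
  have "U x \<le> (\<integral>y. c0 * g y \<partial>lborel)"
    unfolding U_def
  proof (rule integral_mono[OF intU])
    show "integrable lborel (\<lambda>y. c0 * g y)" using g_int by simp
    fix y show "gauss_density s x y * g y \<le> c0 * g y"
      using gd_le' g_pos[of y] by (intro mult_right_mono) auto
  qed
  then show ?thesis by simp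
qed

end


context zs begin

lemma MZ: "M x = U x *\<^sub>R Z x"
  using Upos[of x] by (simp add: Z_def)

lemma jensen:
  fixes x x' :: 'a
  shows "2 * s * ln (U x) + 2 * inner (Z x - x) (x' - x) - (norm (x' - x))\<^sup>2 \<le> 2 * s * ln (U x')"
proof -
  define h where "h = x' - x"
  define c where "c = (2 * inner (Z x - x) h - (norm h)\<^sup>2) / (2 * s)"
  define L where "L = (\<lambda>y. exp c * (gauss_density s x y * g y)
      + (exp c / s) * ((gauss_density s x y *\<^sub>R (g y *\<^sub>R y)) \<bullet> h - gauss_density s x y * g y * (Z x \<bullet> h)))"
  have pw: "L y \<le> gauss_density s x' y * g y" for y
  proof -
    define E where "E = ((norm (y - x))\<^sup>2 - (norm (y - x'))\<^sup>2) / (2 * s)"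
    define P where "P = gauss_density s x y * g y"
    have P0: "P \<ge> 0" using gdp[of x y] g_pos[of y] by (simp add: P_def)
    have shift: "gauss_density s x' y = gauss_density s x y * exp E"
      unfolding E_def by (rule gd_shift)
    have E2: "E = (2 * inner (y - x) h - (norm h)\<^sup>2) / (2 * s)"
      unfolding E_def h_def using norm_sq_id[of y x x'] by simp
    have Ec: "E - c = inner (y - Z x) h / s"
    proof -
      have "E - c = (2 * inner (y - x) h - 2 * inner (Z x - x) h) / (2 * s)"
        unfolding E2 c_def by (simp add: diff_divide_distrib)
      also have "\<dots> = inner (y - Z x) h / s"
        using s_pos by (simp add: inner_diff_left field_simps)
      finally show ?thesis .
    qed
    have ex: "exp c * (1 + (E - c)) \<le> exp E"
    proof -
      have "exp c * (1 + (E - c)) \<le> exp c * exp (E - c)"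
        by (intro mult_left_mono) auto
      also have "\<dots> = exp E" by (simp add: exp_diff)
      finally show ?thesis .
    qed
    have "L y = P * (exp c * (1 + inner (y - Z x) h / s))"
      unfolding L_def P_def using s_pos by (simp add: inner_diff_left field_simps)
    also have "\<dots> \<le> P * exp E" using ex Ec P0 by (intro mult_left_mono) auto
    also have "\<dots> = gauss_density s x' y * g y" by (simp add: shift P_def mult_ac)
    finally show ?thesis .
  qed
  have i2: "integrable lborel (\<lambda>y. (gauss_density s x y *\<^sub>R (g y *\<^sub>R y)) \<bullet> h)"
    using intM[of x] by (rule integrable_inner_left)
  have i3: "integrable lborel (\<lambda>y. gauss_density s x y * g y * (Z x \<bullet> h))"
    using intU[of x] by (rule integrable_mult_left)
  have intL: "integrable lborel L"
    unfolding L_def using intU[of x] i2 i3 by (intro Bochner_Integration.integrable_add Bochner_Integration.integrable_mult_right Bochner_Integration.integrable_diff) auto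
  have ii: "(\<integral>y. (gauss_density s x y *\<^sub>R (g y *\<^sub>R y)) \<bullet> h \<partial>lborel) = M x \<bullet> h"
    unfolding M_def by (rule integral_inner_left) (rule intM)
  have "integral\<^sup>L lborel L = exp c * U x + (exp c / s) * (M x \<bullet> h - U x * (Z x \<bullet> h))"
    unfolding L_def U_def using intU[of x] i2 i3 intM[of x]
    by (simp add: Bochner_Integration.integral_add Bochner_Integration.integral_diff ii[simplified])
  also have "\<dots> = exp c * U x" by (simp add: MZ)
  finally have "exp c * U x \<le> U x'"
    using integral_mono[OF intL intU[of x'] pw] by (simp add: U_def)
  then have "ln (exp c * U x) \<le> ln (U x')" using Upos[of x] by (intro ln_mono) auto
  then have "c + ln (U x) \<le> ln (U x')" using Upos[of x] by (simp add: ln_mult)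
  then have "2 * s * (c + ln (U x)) \<le> 2 * s * ln (U x')" using s_pos by simp
  moreover have "2 * s * c = 2 * inner (Z x - x) (x' - x) - (norm (x' - x))\<^sup>2"
    using s_pos by (simp add: c_def h_def)
  ultimately show ?thesis by (simp add: algebra_simps)
qed

end


context zs begin

lemma cont_param:
  fixes F :: "'a \<Rightarrow> 'a \<Rightarrow> 'b::{banach,second_countable_topology}"
  assumes meas: "\<And>x. F x \<in> borel_measurable lborel"
    and cont: "\<And>y. isCont (\<lambda>x. F x y) x0"
    and bnd: "\<And>x y. norm (F x y) \<le> (K + L * norm x) * g y" and L: "L \<ge> 0"
  shows "isCont (\<lambda>x. \<integral>y. F x y \<partial>lborel) x0"
proof (rule continuous_at_sequentiallyI)
  fix u assume u: "u \<longlonglongrightarrow> x0"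
  then have "Bseq u" using convergent_imp_Bseq convergentI by blast
  then obtain R where R: "\<And>n. norm (u n) \<le> R" by (elim BseqE) blast
  show "(\<lambda>n. \<integral>y. F (u n) y \<partial>lborel) \<longlonglongrightarrow> (\<integral>y. F x0 y \<partial>lborel)"
  proof (rule integral_dominated_convergence[where w="\<lambda>y. (K + L * R) * g y" and s="\<lambda>n y. F (u n) y" and f="\<lambda>y. F x0 y"])
    show "(\<lambda>y. F x0 y) \<in> borel_measurable lborel" using meas[of x0] by simp
    show "\<And>i. (\<lambda>y. F (u i) y) \<in> borel_measurable lborel" using meas by simp
    show "integrable lborel (\<lambda>y. (K + L * R) * g y)" using g_int by simp
    show "AE y in lborel. (\<lambda>i. F (u i) y) \<longlonglongrightarrow> F x0 y"
      using isCont_tendsto_compose[OF cont u] by simp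
    show "AE y in lborel. norm (F (u i) y) \<le> (K + L * R) * g y" for i
    proof (rule AE_I2)
      fix y
      have "L * norm (u i) \<le> L * R" using L R[of i] by (intro mult_left_mono) auto
      then have "(K + L * norm (u i)) * g y \<le> (K + L * R) * g y"
        using g_pos[of y] by (intro mult_right_mono) auto
      then show "norm (F (u i) y) \<le> (K + L * R) * g y" using bnd[of "u i" y] by linarith
    qed
  qed
qed

lemma contU: "isCont U x0"
proof -
  have "isCont (\<lambda>x. \<integral>y. gauss_density s x y * g y \<partial>lborel) x0"
  proof (rule cont_param[where K=c0 and L=0])
    show "\<And>x. (\<lambda>y. gauss_density s x y * g y) \<in> borel_measurable lborel" by measurable
    show "isCont (\<lambda>x. gauss_density s x y * g y) x0" for y
      using gd_cont[OF s_pos] by (intro continuous_intros) auto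
    show "norm (gauss_density s x y * g y) \<le> (c0 + 0 * norm x) * g y" for x y
    proof -
      have "gauss_density s x y * g y \<le> c0 * g y"
        using gd_le'[of x y] g_pos[of y] by (intro mult_right_mono) auto
      then show ?thesis using gdp[of x y] g_pos[of y] by (simp add: abs_of_pos)
    qed
  qed simp
  then show ?thesis by (simp add: U_def[abs_def])
qed

lemma contM: "isCont M x0"
proof -
  have "isCont (\<lambda>x. \<integral>y. gauss_density s x y *\<^sub>R (g y *\<^sub>R y) \<partial>lborel) x0"
  proof (rule cont_param[where K="c0 * (1 + 2 * s)" and L=c0])
    show "\<And>x. (\<lambda>y. gauss_density s x y *\<^sub>R (g y *\<^sub>R y)) \<in> borel_measurable lborel" by measurable
    show "isCont (\<lambda>x. gauss_density s x y *\<^sub>R (g y *\<^sub>R y)) x0" for y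
      using gd_cont[OF s_pos] by (intro continuous_intros) auto
    show "norm (gauss_density s x y *\<^sub>R (g y *\<^sub>R y)) \<le> (c0 * (1 + 2 * s) + c0 * norm x) * g y" for x y
    proof -
      have "gauss_density s x y * norm y * g y \<le> c0 * (1 + 2 * s + norm x) * g y"
        using gd_nb[of x y] g_pos[of y] by (intro mult_right_mono) auto
      then show ?thesis using gdp[of x y] g_pos[of y] by (simp add: abs_of_pos algebra_simps)
    qed
    show "c0 \<ge> 0" using c0_pos by simp
  qed
  then show ?thesis by (simp add: M_def[abs_def])
qed

lemma contZ: "isCont Z x0"
proof -
  have "isCont (\<lambda>x. (1 / U x) *\<^sub>R M x) x0"
    using contU contM Upos[of x0] by (intro continuous_intros) auto
  then show ?thesis by (simp add: Z_def[abs_def])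
qed

lemma key_bound:
  fixes x y :: 'a
  shows "norm (ln (U y) - ln (U x) - inner (y - x) ((1 / s) *\<^sub>R (Z x - x))) / norm (y - x)
     \<le> norm (y - x) / (2 * s) + norm (Z y - Z x) / s"
proof (cases "y = x")
  case True then show ?thesis by simp
next
  case False
  define hh where "hh = y - x"
  define n where "n = norm hh"
  define m where "m = norm (Z y - Z x)"
  define D where "D = ln (U y) - ln (U x) - inner (y - x) ((1 / s) *\<^sub>R (Z x - x))"
  define a1 where "a1 = inner (Z x - x) hh"
  define a3 where "a3 = inner (Z y - Z x) hh"
  have n0: "n > 0" using False by (simp add: n_def hh_def)
  have j1: "2 * s * ln (U x) + 2 * a1 - n\<^sup>2 \<le> 2 * s * ln (U y)"
    using jensen[of x y] by (simp add: a1_def n_def hh_def)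
  have j2: "2 * s * ln (U y) + 2 * inner (Z y - y) (x - y) - (norm (x - y))\<^sup>2 \<le> 2 * s * ln (U x)"
    using jensen[of y x] by simp
  have e1: "inner (Z y - y) (x - y) = - (a3 + a1 - n\<^sup>2)"
  proof -
    have "x - y = - hh" by (simp add: hh_def)
    then have X: "inner (Z y - y) (x - y) = - inner (Z y - y) hh" by simp
    have A: "inner (Z y - y) hh = inner (Z y) hh - inner y hh" by (rule inner_diff_left)
    have B: "a3 = inner (Z y) hh - inner (Z x) hh" by (simp add: a3_def inner_diff_left)
    have C: "a1 = inner (Z x) hh - inner x hh" by (simp add: a1_def inner_diff_left)
    have Dd: "n\<^sup>2 = inner y hh - inner x hh"
      by (simp add: n_def power2_norm_eq_inner hh_def inner_diff_left inner_diff_right)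
    show ?thesis using X A B C Dd by linarith
  qed
  have e2: "norm (x - y) = n" by (simp add: n_def hh_def norm_minus_commute)
  have e3: "2 * s * D = 2 * s * ln (U y) - 2 * s * ln (U x) - 2 * a1"
    using s_pos by (simp add: D_def a1_def hh_def inner_commute algebra_simps)
  have a3b: "\<bar>a3\<bar> \<le> m * n" unfolding a3_def m_def n_def by (rule Cauchy_Schwarz_ineq2)
  have lo: "- n\<^sup>2 \<le> 2 * s * D" using j1 e3 by linarith
  have hi: "2 * s * D \<le> 2 * a3 - n\<^sup>2" using j2 e3 unfolding e1 e2 by (simp add: algebra_simps)
  have mn: "0 \<le> m * n" by (simp add: m_def n_def)
  have nn: "0 \<le> n\<^sup>2" by simp
  have u1: "2 * s * D \<le> n\<^sup>2 + 2 * (m * n)" using hi a3b nn by linarith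
  have u2: "- (n\<^sup>2 + 2 * (m * n)) \<le> 2 * s * D" using lo mn by linarith
  have "\<bar>2 * s * D\<bar> \<le> n\<^sup>2 + 2 * (m * n)" using u1 u2 by (intro abs_leI) (auto simp: minus_le_iff)
  then have "2 * s * \<bar>D\<bar> \<le> n * (n + 2 * m)" using s_pos by (simp add: abs_mult power2_eq_square algebra_simps)
  then have "\<bar>D\<bar> / n \<le> (n + 2 * m) / (2 * s)" using s_pos n0
    by (simp add: divide_simps mult_ac)
  also have "\<dots> = n / (2 * s) + m / s" using s_pos by (simp add: field_simps)
  finally show ?thesis by (simp add: D_def n_def m_def hh_def)
qed

lemma deriv_lnU: "((\<lambda>y. ln (U y)) has_derivative (\<lambda>h. inner h ((1 / s) *\<^sub>R (Z x - x)))) (at x)"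
  unfolding has_derivative_iff_norm
proof
  show "bounded_linear (\<lambda>h. inner h ((1 / s) *\<^sub>R (Z x - x)))" by (rule bounded_linear_inner_left)
  have lim: "((\<lambda>y. norm (y - x) / (2 * s) + norm (Z y - Z x) / s) \<longlongrightarrow> norm (x - x) / (2 * s) + norm (Z x - Z x) / s) (at x)"
    using contZ[of x] s_pos unfolding isCont_def by (intro tendsto_intros) auto
  show "((\<lambda>y. norm (ln (U y) - ln (U x) - inner (y - x) ((1 / s) *\<^sub>R (Z x - x))) / norm (y - x)) \<longlongrightarrow> 0) (at x)"
  proof (rule tendsto_sandwich[OF _ _ tendsto_const])
    show "\<forall>\<^sub>F y in at x. 0 \<le> norm (ln (U y) - ln (U x) - inner (y - x) ((1 / s) *\<^sub>R (Z x - x))) / norm (y - x)"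
      by simp
    show "\<forall>\<^sub>F y in at x. norm (ln (U y) - ln (U x) - inner (y - x) ((1 / s) *\<^sub>R (Z x - x))) / norm (y - x)
        \<le> norm (y - x) / (2 * s) + norm (Z y - Z x) / s"
      using key_bound by simp
    show "((\<lambda>y. norm (y - x) / (2 * s) + norm (Z y - Z x) / s) \<longlongrightarrow> 0) (at x)"
      using lim by simp
  qed
qed

end


theorem theorem9:
  fixes f :: "'a::euclidean_space \<Rightarrow> real" and lam del :: real and x :: "nat \<Rightarrow> 'a"
  assumes lam: "lam > 0" and del: "del > 0"
    and A1_cont: "continuous_on UNIV f"
    and A1_min: "\<exists>xm. \<forall>y. f xm \<le> f y"
    and A2: "(\<integral>\<^sup>+ y. ennreal (exp (- f y / del)) \<partial>lborel) < \<infinity>"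
    and zoppa: "\<And>k. x (Suc k) = zprox lam del f (x k)"
  shows "(\<forall>k. soft_moreau lam del f (x (Suc k))
              \<le> soft_moreau lam del f (x k) - (1 / (2 * lam)) * (norm (x (Suc k) - x k))\<^sup>2)
       \<and> (\<forall>k. \<exists>G. GDERIV (soft_moreau lam del f) (x k) :> G \<and> norm G = norm (x (Suc k) - x k) / lam)
       \<and> (\<lambda>k. norm (x (Suc k) - x k) / lam) \<longlonglongrightarrow> 0"
proof -
  define g where "g = (\<lambda>y::'a. exp (- f y / del))"
  have fm[measurable]: "f \<in> borel_measurable lborel"
    using borel_measurable_continuous_onI[OF A1_cont] by simp
  have gm: "g \<in> borel_measurable lborel" unfolding g_def by measurable
  have gi: "integrable lborel g"
  proof (rule integrableI_bounded)
    show "g \<in> borel_measurable lborel" by (rule gm)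
    show "(\<integral>\<^sup>+ y. ennreal (norm (g y)) \<partial>lborel) < \<infinity>" using A2 by (simp add: g_def)
  qed
  have gp: "\<And>y. g y > 0" by (simp add: g_def)
  have s0: "lam * del > 0" using lam del by simp
  have zsI: "zs (lam * del) g" using s0 gm gi gp by unfold_locales auto
  interpret zs "lam * del" g by (rule zsI)
  have SM: "\<And>z. soft_moreau lam del f z = - del * ln (U z)"
    unfolding zs.U_def[OF zsI] by (simp add: soft_moreau_def gauss_expect_def g_def)
  have ZP: "\<And>z. zprox lam del f z = Z z"
    unfolding zs.Z_def[OF zsI] zs.U_def[OF zsI] zs.M_def[OF zsI] by (simp add: zprox_def gauss_expect_def g_def)
  have xs: "\<And>k. x (Suc k) = Z (x k)" using zoppa ZP by simp
  have desc: "soft_moreau lam del f (x (Suc k))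
              \<le> soft_moreau lam del f (x k) - (1 / (2 * lam)) * (norm (x (Suc k) - x k))\<^sup>2" for k
  proof -
    define z where "z = x k"
    define w where "w = x (Suc k)"
    define q where "q = (norm (w - z))\<^sup>2"
    have j: "2 * (lam * del) * ln (U z) + 2 * inner (Z z - z) (w - z) - (norm (w - z))\<^sup>2
        \<le> 2 * (lam * del) * ln (U w)" by (rule jensen)
    have "inner (Z z - z) (w - z) = q" using xs[of k] by (simp add: q_def w_def z_def power2_norm_eq_inner)
    then have j2: "2 * (lam * del) * ln (U z) + q \<le> 2 * (lam * del) * ln (U w)" using j by (simp add: q_def)
    have eqL: "2 * (lam * del) * ln (U z) + q = (2 * lam) * (del * ln (U z) + q / (2 * lam))"
      using lam by (simp add: field_simps)
    have eqR: "2 * (lam * del) * ln (U w) = (2 * lam) * (del * ln (U w))" by simp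
    have "del * ln (U z) + q / (2 * lam) \<le> del * ln (U w)"
      using j2 unfolding eqL eqR using lam by simp
    moreover have "q / (2 * lam) = (1 / (2 * lam)) * q" by simp
    ultimately show ?thesis unfolding SM by (simp add: q_def w_def z_def)
  qed
  have grad: "\<exists>G. GDERIV (soft_moreau lam del f) (x k) :> G \<and> norm G = norm (x (Suc k) - x k) / lam" for k
  proof -
    define z where "z = x k"
    define v where "v = (1 / (lam * del)) *\<^sub>R (Z z - z)"
    have d: "((\<lambda>y. ln (U y)) has_derivative (\<lambda>h. inner h v)) (at z)" unfolding v_def by (rule deriv_lnU)
    have "((\<lambda>y. - del * ln (U y)) has_derivative (\<lambda>h. - del * inner h v)) (at z)"
      by (rule has_derivative_mult_right[OF d])
    moreover have "(\<lambda>y. - del * ln (U y)) = soft_moreau lam del f" by (simp add: SM fun_eq_iff)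
    moreover have "(\<lambda>h. - del * inner h v) = (\<lambda>h. inner h ((- del) *\<^sub>R v))" by (simp add: fun_eq_iff)
    ultimately have "GDERIV (soft_moreau lam del f) z :> ((- del) *\<^sub>R v)" by (simp add: gderiv_def)
    moreover have "norm ((- del) *\<^sub>R v) = norm (x (Suc k) - x k) / lam"
      using lam del xs[of k] by (simp add: v_def z_def)
    ultimately show ?thesis unfolding z_def by blast
  qed
  define B where "B = - del * ln (c0 * integral\<^sup>L lborel g)"
  have SMb: "soft_moreau lam del f z \<ge> B" for z
  proof -
    have "ln (U z) \<le> ln (c0 * integral\<^sup>L lborel g)" using Upos[of z] Ubnd[of z] by (intro ln_mono) auto
    then show ?thesis unfolding SM B_def using del by simp
  qed
  define dd where "dd k = (norm (x (Suc k) - x k))\<^sup>2" for k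
  have tel: "soft_moreau lam del f (x n) \<le> soft_moreau lam del f (x 0) - (1 / (2 * lam)) * (\<Sum>k<n. dd k)" for n
  proof (induction n)
    case 0 then show ?case by simp
  next
    case (Suc n)
    then show ?case using desc[of n] by (simp add: dd_def algebra_simps)
  qed
  have bnd: "(\<Sum>k<n. dd k) \<le> 2 * lam * (soft_moreau lam del f (x 0) - B)" for n
  proof -
    have "(1 / (2 * lam)) * (\<Sum>k<n. dd k) \<le> soft_moreau lam del f (x 0) - B"
      using tel[of n] SMb[of "x n"] by linarith
    then show ?thesis using lam by (simp add: field_simps)
  qed
  have "summable dd" by (rule summableI_nonneg_bounded[OF _ bnd]) (simp add: dd_def)
  then have "dd \<longlonglongrightarrow> 0" by (rule summable_LIMSEQ_zero)
  then have "(\<lambda>k. sqrt (dd k)) \<longlonglongrightarrow> sqrt 0" by (rule tendsto_real_sqrt)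
  then have "(\<lambda>k. norm (x (Suc k) - x k)) \<longlonglongrightarrow> 0" by (simp add: dd_def)
  then have "(\<lambda>k. norm (x (Suc k) - x k) / lam) \<longlonglongrightarrow> 0" by (rule tendsto_divide_zero)
  with desc grad show ?thesis by blast
qed


end
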